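(* There exist constants $c,C>0$ such that for all $x\in\Omega$, $$c\,\delta(x)^s|\log\delta(x)| \le \varphi_\delta(x)\le C\,\delta(x)^s\bigl(1+|\log\delta(x)|\bigr).$$
   Context: Setting: $n\ge 2$, $s\in(0,1)$, $\Omega\subset\mathbb R^n$ bounded domain with $C^2$ boundary, $\delta(x)=\operatorname{dist}(x,\mathbb R^n\setminus\Omega)$. Let $\mathbb G_s$ be the Green function of the restricted fractional Laplacian $(-\Delta)^s$ (defined by $c_{n,s}\,\mathrm{P.V.}\int_{\mathbb R^n}\frac{u(x)-u(y)}{|x-y|^{n+2s}}dy$) in $\Omega$ with zero exterior condition; it satisfies the two-sided estimate $\mathbb G_s(x,y)\asymp |x-y|^{2s-n}\bigl(\frac{\delta(x)}{|x-y|}\wedge1\bigr)^s\bigl(\frac{\delta(y)}{|x-y|}\wedge1\bigr)^s$. Define $\varphi_\delta(x)=\int_\Omega \mathbb G_s(x,y)\,\delta(y)^{-s}\,dy$, i.e. the solution of $(-\Delta)^s\varphi_\delta=\delta^{-s}$ in $\Omega$, $\varphi_\delta=0$ in $\mathbb R^n\setminus\Omega$. *)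

theory Defs
  imports "HOL-Analysis.Analysis"
begin

definition bdist :: "(real^'n) set \<Rightarrow> real^'n \<Rightarrow> real" where
  "bdist \<Omega> x = infdist x (- \<Omega>)"

definition C2_on :: "(real^'n) set \<Rightarrow> (real^'n \<Rightarrow> real) \<Rightarrow> bool" where
  "C2_on U f \<longleftrightarrow> (\<exists>D H. (\<forall>x\<in>U. (f has_derivative (\<lambda>h. D x \<bullet> h)) (at x))
      \<and> (\<forall>x\<in>U. (D has_derivative (\<lambda>h. H x *v h)) (at x))
      \<and> continuous_on U H)"

definition C2_boundary :: "(real^'n) set \<Rightarrow> bool" where
  "C2_boundary \<Omega> \<longleftrightarrow> (\<forall>p\<in>frontier \<Omega>. \<exists>U \<rho> D. open U \<and> p \<in> U \<and> C2_on U \<rho>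
      \<and> (\<forall>x\<in>U. (\<rho> has_derivative (\<lambda>h. D x \<bullet> h)) (at x) \<and> D x \<noteq> 0)
      \<and> \<Omega> \<inter> U = {x\<in>U. \<rho> x < 0})"

definition frac_const :: "nat \<Rightarrow> real \<Rightarrow> real" where
  "frac_const n s = s * 4 powr s * Gamma (real n / 2 + s) / (pi powr (real n / 2) * Gamma (1 - s))"

definition frac_lap_at :: "real \<Rightarrow> (real^'n \<Rightarrow> real) \<Rightarrow> real^'n \<Rightarrow> real \<Rightarrow> bool" where
  "frac_lap_at s u x L \<longleftrightarrow>
     (\<forall>e>0. integrable lborel
        (\<lambda>y. indicator {y. e < dist x y} y * (u x - u y) / dist x y powr (real CARD('n) + 2 * s)))
   \<and> ((\<lambda>e. frac_const CARD('n) s * (LINT y|lborel.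
        indicator {y. e < dist x y} y * (u x - u y) / dist x y powr (real CARD('n) + 2 * s)))
        \<longlongrightarrow> L) (at_right 0)"

definition frac_green :: "real \<Rightarrow> (real^'n) set \<Rightarrow> (real^'n \<Rightarrow> real^'n \<Rightarrow> real) \<Rightarrow> bool" where
  "frac_green s \<Omega> G \<longleftrightarrow>
     (\<forall>x\<in>\<Omega>. G x \<in> borel_measurable lborel) \<and>
     (\<forall>f. C2_on UNIV f \<and> compact (closure {y. f y \<noteq> 0}) \<and> closure {y. f y \<noteq> 0} \<subseteq> \<Omega> \<longrightarrow>
        (\<forall>x\<in>\<Omega>. frac_lap_at s (\<lambda>z. if z \<in> \<Omega> then (LINT y:\<Omega>|lborel. G z y * f y) else 0) x (f x)))"

definition phi_delta :: "real \<Rightarrow> (real^'n) set \<Rightarrow> (real^'n \<Rightarrow> real^'n \<Rightarrow> real) \<Rightarrow> real^'n \<Rightarrow> real" where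
  "phi_delta s \<Omega> G x = (LINT y:\<Omega>|lborel. G x y * bdist \<Omega> y powr (- s))"

end

theory Submission
  imports Defs
begin

lemma local_cone:
  fixes \<Omega> :: "(real^'n) set"
  assumes "C2_boundary \<Omega>" "p \<in> frontier \<Omega>"
  shows "\<exists>l>0. \<exists>\<nu>. norm \<nu> = 1 \<and> (\<forall>x\<in>\<Omega> \<inter> ball p l. \<forall>\<tau>. 0 < \<tau> \<and> \<tau> \<le> l/2 \<longrightarrow> ball (x - \<tau> *\<^sub>R \<nu>) (\<tau>/8) \<subseteq> \<Omega>)"
proof -
  have "\<exists>U \<rho> D. open U \<and> p \<in> U \<and> C2_on U \<rho>
      \<and> (\<forall>x\<in>U. (\<rho> has_derivative (\<lambda>h. D x \<bullet> h)) (at x) \<and> D x \<noteq> 0)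
      \<and> \<Omega> \<inter> U = {x\<in>U. \<rho> x < 0}"
    using assms(1) assms(2) unfolding C2_boundary_def by (rule bspec)
  then obtain U \<rho> D where U: "open U" "p \<in> U" "C2_on U \<rho>"
    and Dd': "\<forall>x\<in>U. (\<rho> has_derivative (\<lambda>h. D x \<bullet> h)) (at x) \<and> D x \<noteq> 0"
    and OU: "\<Omega> \<inter> U = {x\<in>U. \<rho> x < 0}"
    by (elim exE conjE)
  have Dd: "\<And>x. x\<in>U \<Longrightarrow> (\<rho> has_derivative (\<lambda>h. D x \<bullet> h)) (at x) \<and> D x \<noteq> 0"
    using Dd' by (rule bspec)
  obtain D' H where D'1': "\<forall>x\<in>U. (\<rho> has_derivative (\<lambda>h. D' x \<bullet> h)) (at x)"
     and D'2': "\<forall>x\<in>U. (D' has_derivative (\<lambda>h. H x *v h)) (at x)"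
    using U(3) unfolding C2_on_def by (elim exE conjE)
  have D'1: "\<And>x. x\<in>U \<Longrightarrow> (\<rho> has_derivative (\<lambda>h. D' x \<bullet> h)) (at x)"
    using D'1' by (rule bspec)
  have D'2: "\<And>x. x\<in>U \<Longrightarrow> (D' has_derivative (\<lambda>h. H x *v h)) (at x)"
    using D'2' by (rule bspec)
  have "(\<lambda>h. D p \<bullet> h) = (\<lambda>h. D' p \<bullet> h)"
    using has_derivative_unique Dd[OF U(2)] D'1[OF U(2)] by blast
  then have "D p \<bullet> (D p - D' p) = D' p \<bullet> (D p - D' p)" by metis
  then have "(D p - D' p) \<bullet> (D p - D' p) = 0" by (simp add: inner_diff_left)
  then have "D p = D' p" by simp
  with Dd[OF U(2)] have Dp0: "D' p \<noteq> 0" by simp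
  define a where "a = norm (D' p)"
  have a0: "a > 0" using Dp0 a_def by simp
  define \<nu> where "\<nu> = (1/a) *\<^sub>R D' p"
  have nu1: "norm \<nu> = 1" using a0 by (simp add: \<nu>_def a_def)
  have Dnu: "D' p \<bullet> \<nu> = a" using a0 by (simp add: \<nu>_def a_def inner_commute power2_norm_eq_inner[symmetric] power2_eq_square)
  have "continuous (at p) D'" using D'2[OF U(2)] has_derivative_continuous by blast
  then obtain e where e: "e > 0" "\<And>z. dist z p < e \<Longrightarrow> dist (D' z) (D' p) < a/4"
    unfolding continuous_at_eps_delta using a0 by (metis zero_less_divide_iff zero_less_numeral)
  obtain e2 where e2: "e2 > 0" "ball p e2 \<subseteq> U" using U openE by blast
  define l where "l = min e e2 / 2"
  have l0: "l > 0" using e e2 l_def by simp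
  have ball2: "ball p (2*l) \<subseteq> U" using e2 l_def by auto
  have close: "\<And>z. z \<in> ball p (2*l) \<Longrightarrow> norm (D' z - D' p) < a/4"
    using e l_def by (simp add: dist_norm norm_minus_commute)
  show ?thesis
  proof (intro exI conjI ballI allI impI)
    fix x \<tau> assume x: "x \<in> \<Omega> \<inter> ball p l" and tau: "0 < \<tau> \<and> \<tau> \<le> l/2"
    show "ball (x - \<tau> *\<^sub>R \<nu>) (\<tau>/8) \<subseteq> \<Omega>"
    proof
      fix y assume y: "y \<in> ball (x - \<tau> *\<^sub>R \<nu>) (\<tau>/8)"
      define v where "v = y - x"
      define w where "w = v + \<tau> *\<^sub>R \<nu>"
      have "w = y - (x - \<tau> *\<^sub>R \<nu>)" by (simp add: w_def v_def algebra_simps)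
      then have "norm w = dist (x - \<tau> *\<^sub>R \<nu>) y" by (simp add: dist_norm norm_minus_commute)
      then have nw: "norm w < \<tau>/8" using y by simp
      have nv: "norm v < 9*\<tau>/8"
      proof -
        have "norm v \<le> norm w + norm (\<tau> *\<^sub>R \<nu>)" unfolding w_def
          by (metis add_diff_cancel norm_triangle_ineq4)
        then show ?thesis using nw nu1 tau by simp
      qed
      have xp: "dist p x < l" using x by simp
      have seg: "x + u *\<^sub>R v \<in> ball p (2*l)" if "0 \<le> u" "u \<le> 1" for u
      proof -
        have "norm (u *\<^sub>R v) \<le> norm v" using that by (simp add: mult_left_le_one_le)
        have "dist p (x + u *\<^sub>R v) \<le> dist p x + dist x (x + u *\<^sub>R v)" by (rule dist_triangle)
        also have "dist x (x + u *\<^sub>R v) = norm (u *\<^sub>R v)" by (simp add: dist_norm)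
        finally have "dist p (x + u *\<^sub>R v) \<le> dist p x + norm v" using \<open>norm (u *\<^sub>R v) \<le> norm v\<close> by linarith
        then show ?thesis using xp nv tau by simp
      qed
      have deriv: "\<exists>d. DERIV (\<lambda>u. \<rho> (x + u *\<^sub>R v)) u :> d \<and> d < 0" if "0 \<le> u" "u \<le> 1" for u
      proof -
        define z where "z = x + u *\<^sub>R v"
        have zU: "z \<in> U" and zb: "z \<in> ball p (2*l)" using seg[OF that] ball2 z_def by auto
        have hd: "((\<lambda>u. x + u *\<^sub>R v) has_derivative (\<lambda>h. h *\<^sub>R v)) (at u)"
          by (auto intro!: derivative_eq_intros)
        have zU': "x + u *\<^sub>R v \<in> U" using zU z_def by simp
        have "((\<lambda>u. \<rho> (x + u *\<^sub>R v)) has_derivative (\<lambda>h. D' (x + u *\<^sub>R v) \<bullet> (h *\<^sub>R v))) (at u)"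
          by (rule has_derivative_compose[OF hd D'1[OF zU']])
        then have "((\<lambda>u. \<rho> (x + u *\<^sub>R v)) has_derivative (\<lambda>h. (D' z \<bullet> v) * h)) (at u)"
          by (simp add: z_def mult.commute)
        then have dd: "DERIV (\<lambda>u. \<rho> (x + u *\<^sub>R v)) u :> D' z \<bullet> v"
          unfolding has_field_derivative_def by simp
        have "D' z \<bullet> v = D' p \<bullet> v + (D' z - D' p) \<bullet> v" by (simp add: inner_diff_left)
        also have "D' p \<bullet> v = - \<tau> * a + D' p \<bullet> w"
          using Dnu by (simp add: w_def inner_add_right inner_diff_right)
        finally have eq: "D' z \<bullet> v = - \<tau> * a + D' p \<bullet> w + (D' z - D' p) \<bullet> v" .
        have nd: "norm (D' z - D' p) < a/4" using close[OF zb] .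
        have i1: "D' p \<bullet> w \<le> a * (\<tau>/8)"
        proof -
          have "D' p \<bullet> w \<le> norm (D' p) * norm w" using Cauchy_Schwarz_ineq2 by (metis abs_le_D1)
          also have "\<dots> \<le> a * (\<tau>/8)" using mult_left_mono[of "norm w" "\<tau>/8" a] nw a0 a_def by simp
          finally show ?thesis .
        qed
        have i2: "(D' z - D' p) \<bullet> v \<le> (a/4) * (9*\<tau>/8)"
        proof -
          have "(D' z - D' p) \<bullet> v \<le> norm (D' z - D' p) * norm v"
            using Cauchy_Schwarz_ineq2 by (metis abs_le_D1)
          also have "\<dots> \<le> (a/4) * (9*\<tau>/8)"
            using nd nv a0 by (intro mult_mono) auto
          finally show ?thesis .
        qed
        have "a * \<tau> > 0" using a0 tau by simp
        then have "D' z \<bullet> v < 0" using eq i1 i2 by (simp add: algebra_simps)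
        then show ?thesis using dd by blast
      qed
      have "\<rho> (x + 0 *\<^sub>R v) > \<rho> (x + 1 *\<^sub>R v)"
        by (rule DERIV_neg_imp_decreasing[of 0 1]) (use deriv in auto)
      then have "\<rho> y < \<rho> x" by (simp add: v_def)
      have xU: "x \<in> U" using x ball2 l0 by auto
      have "x \<in> \<Omega> \<inter> U" using x xU by blast
      then have "x \<in> {x\<in>U. \<rho> x < 0}" by (simp only: OU)
      then have "\<rho> x < 0" by simp
      have "y \<in> ball p (2*l)" using seg[of 1] by (simp add: v_def)
      then have "y \<in> U" using ball2 by blast
      then have "y \<in> {x\<in>U. \<rho> x < 0}" using \<open>\<rho> y < \<rho> x\<close> \<open>\<rho> x < 0\<close> by simp
      then have "y \<in> \<Omega> \<inter> U" by (simp only: OU)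
      then show "y \<in> \<Omega>" by blast
    qed
  qed (use l0 nu1 in auto)
qed

lemma global_cone:
  fixes \<Omega> :: "(real^'n) set"
  assumes op: "open \<Omega>" and bd: "bounded \<Omega>" and c2: "C2_boundary \<Omega>"
  shows "\<exists>d0>0. \<exists>\<tau>0>0. \<forall>x\<in>\<Omega>. bdist \<Omega> x < d0 \<longrightarrow>
     (\<exists>\<nu>. norm \<nu> = 1 \<and> (\<forall>\<tau>. 0 < \<tau> \<and> \<tau> \<le> \<tau>0 \<longrightarrow> ball (x - \<tau> *\<^sub>R \<nu>) (\<tau>/8) \<subseteq> \<Omega>))"
proof -
  define Q where "Q = (\<lambda>p l \<nu>. l > 0 \<and> norm \<nu> = 1 \<and> (\<forall>x\<in>\<Omega> \<inter> ball p l. \<forall>\<tau>. 0 < \<tau> \<and> \<tau> \<le> l/2 \<longrightarrow> ball (x - \<tau> *\<^sub>R \<nu>) (\<tau>/8) \<subseteq> \<Omega>))"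
  have "\<forall>p\<in>frontier \<Omega>. \<exists>l. \<exists>\<nu>. Q p l \<nu>"
    using local_cone[OF c2] unfolding Q_def by blast
  then obtain L where "\<forall>p\<in>frontier \<Omega>. \<exists>\<nu>. Q p (L p) \<nu>" by (metis bchoice)
  then obtain N where LN: "\<forall>p\<in>frontier \<Omega>. Q p (L p) (N p)" by (metis bchoice)
  have cf: "compact (frontier \<Omega>)" using bd by (rule compact_frontier_bounded)
  obtain P where P: "P \<subseteq> frontier \<Omega>" "finite P" "frontier \<Omega> \<subseteq> (\<Union>p\<in>P. ball p (L p))"
  proof (rule compactE_image[OF cf, of "frontier \<Omega>" "\<lambda>p. ball p (L p)"])
    show "frontier \<Omega> \<subseteq> (\<Union>p\<in>frontier \<Omega>. ball p (L p))"
    proof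
      fix x assume "x \<in> frontier \<Omega>"
      then have "L x > 0" using LN unfolding Q_def by blast
      then show "x \<in> (\<Union>p\<in>frontier \<Omega>. ball p (L p))" using \<open>x \<in> frontier \<Omega>\<close> by force
    qed
  qed auto
  have Lpos: "\<And>p. p \<in> P \<Longrightarrow> L p > 0" using LN P(1) unfolding Q_def by blast
  define \<tau>0 where "\<tau>0 = (if P = {} then 1 else Min (L ` P)) / 2"
  have t0: "\<tau>0 > 0"
    using Lpos P(2) by (auto simp: \<tau>0_def Min_gr_iff)
  have t0L: "\<And>p. p \<in> P \<Longrightarrow> \<tau>0 \<le> L p / 2"
    using P(2) by (auto simp: \<tau>0_def)
  define V where "V = (\<Union>p\<in>P. ball p (L p))"
  define K where "K = closure \<Omega> - V"
  have "open V" unfolding V_def by auto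
  then have cK: "compact K" unfolding K_def
    using bd by (intro compact_Int_closed[of "closure \<Omega>" "- V", simplified Diff_eq[symmetric]]) (auto simp: compact_closure)
  have KO: "K \<subseteq> \<Omega>"
    using P(3) closure_Un_frontier[of \<Omega>] unfolding K_def V_def by blast
  have nc: "- \<Omega> \<noteq> {}"
  proof
    assume "- \<Omega> = {}"
    then have "\<Omega> = UNIV" by auto
    with bd show False by simp
  qed
  have cl: "closed (- \<Omega>)" using op by auto
  have dpos: "\<And>x. x \<in> \<Omega> \<Longrightarrow> bdist \<Omega> x > 0"
    unfolding bdist_def using infdist_pos_not_in_closed[OF cl nc] by auto
  obtain d0 where d0: "d0 > 0" "\<And>x. x \<in> K \<Longrightarrow> d0 \<le> bdist \<Omega> x"
  proof (cases "K = {}")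
    case True then show ?thesis using that[of 1] by auto
  next
    case False
    have "continuous_on K (bdist \<Omega>)" unfolding bdist_def
      by (intro continuous_intros)
    then obtain k where "k \<in> K" "\<forall>y\<in>K. bdist \<Omega> k \<le> bdist \<Omega> y"
      using continuous_attains_inf[OF cK False] by blast
    then show ?thesis using that[of "bdist \<Omega> k"] dpos KO by auto
  qed
  have "\<forall>x\<in>\<Omega>. bdist \<Omega> x < d0 \<longrightarrow>
     (\<exists>\<nu>. norm \<nu> = 1 \<and> (\<forall>\<tau>. 0 < \<tau> \<and> \<tau> \<le> \<tau>0 \<longrightarrow> ball (x - \<tau> *\<^sub>R \<nu>) (\<tau>/8) \<subseteq> \<Omega>))"
  proof (intro ballI impI)
    fix x assume x: "x \<in> \<Omega>" "bdist \<Omega> x < d0"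
    have "x \<notin> K" using d0(2) x by force
    then have "x \<in> V" using x closure_subset unfolding K_def by blast
    then obtain p where p: "p \<in> P" "x \<in> ball p (L p)" unfolding V_def by blast
    have Qp: "Q p (L p) (N p)" using LN P(1) p(1) by blast
    show "\<exists>\<nu>. norm \<nu> = 1 \<and> (\<forall>\<tau>. 0 < \<tau> \<and> \<tau> \<le> \<tau>0 \<longrightarrow> ball (x - \<tau> *\<^sub>R \<nu>) (\<tau>/8) \<subseteq> \<Omega>)"
    proof (intro exI[of _ "N p"] conjI allI impI)
      show "norm (N p) = 1" using Qp Q_def by simp
      fix \<tau> assume "0 < \<tau> \<and> \<tau> \<le> \<tau>0"
      then have "0 < \<tau> \<and> \<tau> \<le> L p / 2" using t0L[OF p(1)] by simp
      then show "ball (x - \<tau> *\<^sub>R N p) (\<tau> / 8) \<subseteq> \<Omega>"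
        using Qp x(1) p(2) unfolding Q_def by blast
    qed
  qed
  then show ?thesis using d0(1) t0 by blast
qed

lemma pw_upper:
  fixes r t dy s n :: real
  assumes r: "r > 0" and t: "t > 0" and dy: "dy > 0" and s: "s > 0"
  shows "r powr (2 * s - n) * (min (t/r) 1) powr s * (min (dy/r) 1) powr s * dy powr (-s)
         \<le> min (r powr (s - n)) (t powr s * r powr (-n))"
proof -
  have A: "(min (dy/r) 1) powr s * dy powr (-s) \<le> r powr (-s)"
  proof (cases "dy \<le> r")
    case True
    then have "(min (dy/r) 1) powr s = dy powr s / r powr s" using r dy by (simp add: powr_divide)
    then show ?thesis using r dy by (simp add: powr_minus field_simps)
  next
    case False
    then have "min (dy/r) 1 = 1" using r by simp
    moreover have "dy powr (-s) \<le> r powr (-s)" using False r s by (intro powr_mono2') auto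
    ultimately show ?thesis by simp
  qed
  have B: "r powr (2 * s - n) * (min (t/r) 1) powr s * r powr (-s) = min (r powr (s - n)) (t powr s * r powr (-n))"
  proof (cases "t \<le> r")
    case True
    then have m: "(min (t/r) 1) powr s = t powr s / r powr s" using r t by (simp add: powr_divide)
    have "r powr (2 * s - n) * (t powr s / r powr s) * r powr (-s) = t powr s * r powr (-n)"
    proof -
      have "r powr (2 * s - n) = r powr s * r powr s * r powr (-n)" using r by (simp add: powr_add[symmetric])
      then show ?thesis using r by (simp add: powr_minus field_simps)
    qed
    moreover have "t powr s * r powr (-n) \<le> r powr (s - n)"
    proof -
      have "t powr s \<le> r powr s" using True t s by (intro powr_mono2) auto
      then have "t powr s * r powr (-n) \<le> r powr s * r powr (-n)" by (intro mult_right_mono) auto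
      also have "\<dots> = r powr (s - n)" using r by (simp add: powr_add[symmetric])
      finally show ?thesis .
    qed
    ultimately show ?thesis using m by simp
  next
    case False
    then have "min (t/r) 1 = 1" using r by simp
    moreover have "r powr (2 * s - n) * r powr (-s) = r powr (s - n)" using r by (simp add: powr_add[symmetric])
    moreover have "r powr (s - n) \<le> t powr s * r powr (-n)"
    proof -
      have "r powr s \<le> t powr s" using False r s by (intro powr_mono2) auto
      then have "r powr s * r powr (-n) \<le> t powr s * r powr (-n)" by (intro mult_right_mono) auto
      moreover have "r powr s * r powr (-n) = r powr (s - n)" using r by (simp add: powr_add[symmetric])
      ultimately show ?thesis by simp
    qed
    ultimately show ?thesis by simp
  qed
  have "r powr (2 * s - n) * (min (t/r) 1) powr s * (min (dy/r) 1) powr s * dy powr (-s)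
        = (r powr (2 * s - n) * (min (t/r) 1) powr s) * ((min (dy/r) 1) powr s * dy powr (-s))" by simp
  also have "\<dots> \<le> (r powr (2 * s - n) * (min (t/r) 1) powr s) * r powr (-s)"
    using A by (intro mult_left_mono) auto
  also have "\<dots> = min (r powr (s - n)) (t powr s * r powr (-n))" using B by simp
  finally show ?thesis .
qed

lemma pw_lower:
  fixes r t dy s n :: real
  assumes r: "r > 0" and t: "t > 0" and dy: "dy > 0" and s: "s > 0" and sn: "2 * s \<le> n"
    and dyle: "dy \<le> t + r"
  shows "r powr (2 * s - n) * (min (t/r) 1) powr s * (min (dy/r) 1) powr s * dy powr (-s)
         \<ge> 2 powr (-s) * t powr s * (max r t) powr (-n)"
proof -
  define m where "m = max r t"
  have m: "m > 0" "r \<le> m" "t \<le> m" "dy \<le> 2*m" using r t dyle by (auto simp: m_def)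
  have A: "(min (dy/r) 1) powr s * dy powr (-s) \<ge> (2*m) powr (-s)"
  proof (cases "dy \<le> r")
    case True
    then have "(min (dy/r) 1) powr s = dy powr s / r powr s" using r dy by (simp add: powr_divide)
    then have "(min (dy/r) 1) powr s * dy powr (-s) = r powr (-s)" using r dy by (simp add: powr_minus field_simps)
    moreover have "(2*m) powr (-s) \<le> r powr (-s)" using m r s by (intro powr_mono2') auto
    ultimately show ?thesis by simp
  next
    case False
    then have "min (dy/r) 1 = 1" using r by simp
    moreover have "(2*m) powr (-s) \<le> dy powr (-s)" using m dy s by (intro powr_mono2') auto
    ultimately show ?thesis by simp
  qed
  have B: "r powr (2 * s - n) * (min (t/r) 1) powr s \<ge> t powr s * m powr (s - n)"
  proof (cases "t \<le> r")
    case True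
    then have mr: "m = r" using m_def by simp
    have "(min (t/r) 1) powr s = t powr s / r powr s" using True r t by (simp add: powr_divide)
    moreover have "r powr (2 * s - n) = r powr s * r powr (s - n)" using r by (simp add: powr_add[symmetric])
    ultimately show ?thesis using r mr by simp
  next
    case False
    then have mt: "m = t" using m_def by simp
    have "min (t/r) 1 = 1" using False r by simp
    moreover have "t powr (2 * s - n) \<le> r powr (2 * s - n)" using False r sn by (intro powr_mono2') auto
    moreover have "t powr (2 * s - n) = t powr s * t powr (s - n)" using t by (simp add: powr_add[symmetric])
    ultimately show ?thesis using mt by simp
  qed
  have "2 powr (-s) * t powr s * m powr (-n) = (t powr s * m powr (s - n)) * (2*m) powr (-s)"
  proof -
    have "(2*m) powr (-s) = 2 powr (-s) * m powr (-s)" using m by (simp add: powr_mult)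
    moreover have "m powr (s - n) * m powr (-s) = m powr (-n)" using m by (simp add: powr_add[symmetric])
    ultimately show ?thesis by (simp add: algebra_simps)
  qed
  also have "\<dots> \<le> (r powr (2 * s - n) * (min (t/r) 1) powr s) * ((min (dy/r) 1) powr s * dy powr (-s))"
    by (rule mult_mono[OF B A]) auto
  finally show ?thesis by (simp add: m_def mult.assoc)
qed

lemma dyadic_sum:
  fixes R t s :: real
  assumes R: "R > 0" and t: "t > 0" and s: "s > 0"
  shows "summable (\<lambda>k. min ((R / 2^(k+1)) powr s) (t powr s)) \<and>
     (\<Sum>k. min ((R / 2^(k+1)) powr s) (t powr s)) \<le> t powr s * (real (nat \<lceil>log 2 (R/t)\<rceil>) + 1/(1 - 2 powr (-s)))"
proof -
  define \<rho> where "\<rho> = (\<lambda>k::nat. R / 2^(k+1))"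
  define b where "b = (\<lambda>k. min ((\<rho> k) powr s) (t powr s))"
  define K where "K = nat \<lceil>log 2 (R/t)\<rceil>"
  define q where "q = (2::real) powr (-s)"
  have "1 < (2::real) powr s" using s by (simp add: gr_one_powr)
  moreover have qq: "q = 1 / 2 powr s" by (simp add: q_def powr_minus divide_inverse)
  ultimately have q: "0 < q" "q < 1" by auto
  have "R/t \<le> 2 powr (log 2 (R/t))" using R t by simp
  also have "\<dots> \<le> 2 powr (real K)"
    by (intro powr_mono) (auto simp: K_def real_nat_ceiling_ge)
  also have "\<dots> = 2^K" by (simp add: powr_realpow)
  finally have "R/t \<le> 2^K" .
  then have "R \<le> t * 2^K" using t by (simp add: field_simps)
  moreover have "t * 2^K \<le> t * (2 * 2^K)" using t by simp
  ultimately have "R \<le> t * (2 * 2^K)" by linarith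
  then have rK: "\<rho> K \<le> t" using t by (simp add: \<rho>_def field_simps)
  have rpos: "\<rho> k > 0" for k using R by (simp add: \<rho>_def)
  have geo: "(\<rho> (K + j)) powr s \<le> t powr s * q^j" for j
  proof (induction j)
    case 0 then show ?case using rK rpos[of K] s by (simp add: powr_mono2)
  next
    case (Suc j)
    have e1: "\<rho> (K + Suc j) = \<rho> (K + j) / 2" by (simp add: \<rho>_def)
    have "(\<rho> (K + Suc j)) powr s = (\<rho> (K + j)) powr s / 2 powr s"
      unfolding e1 by (rule powr_divide)
    also have "\<dots> = (\<rho> (K + j)) powr s * q" using qq by simp
    also have "\<dots> \<le> t powr s * q^j * q" using Suc q by (intro mult_right_mono) auto
    finally show ?case by (simp add: ac_simps)
  qed
  have bK: "b (j + K) \<le> t powr s * q^j" for j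
    using geo[of j] by (simp add: b_def add.commute)
  have b0: "b k \<ge> 0" for k by (simp add: b_def)
  have sg: "summable (\<lambda>j. t powr s * q^j)" using q by (intro summable_mult summable_geometric) auto
  have sK: "summable (\<lambda>j. b (j + K))"
    by (rule summable_comparison_test[of _ "\<lambda>j. t powr s * q^j"]) (use bK b0 sg in auto)
  then have sb: "summable b" by simp
  have "suminf b = (\<Sum>j. b (j + K)) + (\<Sum>i<K. b i)" by (rule suminf_split_initial_segment[OF sb])
  also have "(\<Sum>j. b (j + K)) \<le> (\<Sum>j. t powr s * q^j)" by (rule suminf_le[OF bK sK sg])
  also have "(\<Sum>j. t powr s * q^j) = t powr s * (1 / (1 - q))"
    using q by (simp add: suminf_mult suminf_geometric)
  also have "(\<Sum>i<K. b i) \<le> (\<Sum>i<K. t powr s)" by (intro sum_mono) (simp add: b_def)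
  also have "(\<Sum>i<K. t powr s) = t powr s * real K" by simp
  finally have "suminf b \<le> t powr s * (real K + 1/(1-q))" by (simp add: algebra_simps)
  then show ?thesis using sb unfolding b_def \<rho>_def K_def q_def by simp
qed

lemma K_bound:
  fixes R t :: real
  assumes R: "R > 0" and t: "t > 0"
  shows "real (nat \<lceil>log 2 (R/t)\<rceil>) \<le> (\<bar>ln R\<bar> + \<bar>ln t\<bar>) / ln 2 + 1"
proof -
  have "real (nat \<lceil>log 2 (R/t)\<rceil>) \<le> \<bar>log 2 (R/t)\<bar> + 1"
  proof (cases "\<lceil>log 2 (R/t)\<rceil> \<le> 0")
    case True then show ?thesis by simp
  next
    case False
    then have "real (nat \<lceil>log 2 (R/t)\<rceil>) = real_of_int \<lceil>log 2 (R/t)\<rceil>" by simp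
    also have "\<dots> \<le> log 2 (R/t) + 1" by (rule of_int_ceiling_le_add_one)
    finally show ?thesis by linarith
  qed
  moreover have "log 2 (R/t) = (ln R - ln t) / ln 2" using R t by (simp add: log_def ln_div)
  moreover have "\<bar>(ln R - ln t) / ln 2\<bar> \<le> (\<bar>ln R\<bar> + \<bar>ln t\<bar>) / ln 2"
    by (simp add: abs_divide divide_right_mono)
  ultimately show ?thesis by simp
qed

lemma dyadic_integral:
  fixes x :: "real^'n" and R t s :: real
  assumes R: "R > 0" and t: "t > 0" and s: "0 < s" "s < 1" and n2: "CARD('n) \<ge> 2"
  defines "gb \<equiv> (\<lambda>y. indicator (ball x R) y * min (dist x y powr (s - real CARD('n))) (t powr s * dist x y powr (- real CARD('n))))"
  shows "integrable lborel gb \<and>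
   integral\<^sup>L lborel gb \<le> unit_ball_vol (real CARD('n)) * 2^CARD('n) * (t powr s * (real (nat \<lceil>log 2 (R/t)\<rceil>) + 1/(1 - 2 powr (-s))))"
proof -
  define d where "d = real CARD('n)"
  define N where "N = CARD('n)"
  define h where "h = (\<lambda>r. min (r powr (s - d)) (t powr s * r powr (-d)))"
  define \<rho> where "\<rho> = (\<lambda>k::nat. R / 2^(k+1))"
  define \<omega> where "\<omega> = unit_ball_vol d"
  have gbh: "gb = (\<lambda>y. indicator (ball x R) y * h (dist x y))"
    unfolding gb_def h_def d_def by simp
  have d2: "d \<ge> 2" using n2 by (simp add: d_def)
  have hanti: "h b \<le> h a" if "0 < a" "a \<le> b" for a b
  proof -
    have "b powr (s - d) \<le> a powr (s - d)" using that s d2 by (intro powr_mono2') auto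
    moreover have "b powr (-d) \<le> a powr (-d)" using that d2 by (intro powr_mono2') auto
    then have "t powr s * b powr (-d) \<le> t powr s * a powr (-d)" by (intro mult_left_mono) auto
    ultimately show ?thesis unfolding h_def by (intro min.mono) auto
  qed
  have h0: "h r \<ge> 0" for r unfolding h_def by simp
  have hz: "h 0 = 0" unfolding h_def by simp
  have rpos: "\<rho> k > 0" for k using R by (simp add: \<rho>_def)
  have md: "(\<lambda>y. dist x y) \<in> borel_measurable borel"
    by (intro borel_measurable_continuous_onI continuous_intros)
  have m2: "(\<lambda>y. min (dist x y powr (s - real CARD('n))) (t powr s * dist x y powr (- real CARD('n)))) \<in> borel_measurable borel"
    by (intro borel_measurable_min powr_real_measurable borel_measurable_times md) auto
  have m1: "indicator (ball x R) \<in> borel_measurable borel"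
    by (intro borel_measurable_indicator) simp
  have meas: "gb \<in> borel_measurable lborel" unfolding gb_def
    using borel_measurable_times[OF m1 m2] by simp
  have pw: "ennreal (gb y) \<le> (\<Sum>k. ennreal (h (\<rho> k)) * indicator (ball x (2 * \<rho> k)) y)" for y
  proof (cases "y \<in> ball x R \<and> y \<noteq> x")
    case False
    then have "gb y = 0" using hz by (auto simp: gbh)
    then show ?thesis by simp
  next
    case True
    define r where "r = dist x y"
    have r: "0 < r" "r < R" using True by (auto simp: r_def)
    have ex: "\<exists>k. \<rho> k \<le> r"
    proof -
      obtain m where m: "R / r < 2^m" using real_arch_pow[of 2 "R/r"] by auto
      then have "R < r * 2^m" using r by (simp add: field_simps)
      then have "R / 2^(m+1) \<le> r" using r by (simp add: field_simps)
      then show ?thesis unfolding \<rho>_def by blast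
    qed
    define k where "k = (LEAST k. \<rho> k \<le> r)"
    have k1: "\<rho> k \<le> r" unfolding k_def using LeastI_ex[OF ex] .
    have k2: "r < 2 * \<rho> k"
    proof (cases k)
      case 0 then show ?thesis using r by (simp add: \<rho>_def)
    next
      case (Suc j)
      then have "\<not> \<rho> j \<le> r" using not_less_Least[of j "\<lambda>k. \<rho> k \<le> r"] k_def by auto
      moreover have "\<rho> j = 2 * \<rho> k" using Suc by (simp add: \<rho>_def)
      ultimately show ?thesis by simp
    qed
    have "gb y = h r" using True by (simp add: gbh r_def)
    also have "\<dots> \<le> h (\<rho> k)" using hanti[OF rpos k1] .
    finally have "ennreal (gb y) \<le> ennreal (h (\<rho> k)) * indicator (ball x (2 * \<rho> k)) y"
      using k2 h0[of "\<rho> k"] by (simp add: r_def ennreal_leI)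
    also have "\<dots> \<le> (\<Sum>k. ennreal (h (\<rho> k)) * indicator (ball x (2 * \<rho> k)) y)"
    proof -
      define F where "F = (\<lambda>k. ennreal (h (\<rho> k)) * indicator (ball x (2 * \<rho> k)) y)"
      have "sum F {k} \<le> suminf F" by (rule sum_le_suminf[OF summableI]) auto
      then have "F k \<le> suminf F" by simp
      then show ?thesis unfolding F_def .
    qed
    finally show ?thesis .
  qed
  define b where "b = (\<lambda>k. min ((R / 2^(k+1)) powr s) (t powr s))"
  have hterm: "h (\<rho> k) * (\<omega> * (2 * \<rho> k)^N) = \<omega> * 2^N * b k" for k
  proof -
    have "(2 * \<rho> k)^N = 2^N * (\<rho> k) powr d"
      using rpos[of k] by (simp add: power_mult_distrib powr_realpow d_def N_def)
    moreover have "h (\<rho> k) * (\<rho> k) powr d = b k"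
    proof -
      have "h (\<rho> k) * (\<rho> k) powr d = min ((\<rho> k) powr (s - d) * (\<rho> k) powr d) (t powr s * (\<rho> k) powr (-d) * (\<rho> k) powr d)"
        unfolding h_def by (simp add: min_mult_distrib_right)
      also have "(\<rho> k) powr (s - d) * (\<rho> k) powr d = (\<rho> k) powr s"
        using rpos[of k] by (simp add: powr_add[symmetric])
      also have "t powr s * (\<rho> k) powr (-d) * (\<rho> k) powr d = t powr s"
        using rpos[of k] by (simp add: mult.assoc powr_add[symmetric])
      finally show ?thesis by (simp add: b_def \<rho>_def)
    qed
    ultimately show ?thesis by (simp add: ac_simps)
  qed
  have bsum: "summable b \<and> suminf b \<le> t powr s * (real (nat \<lceil>log 2 (R/t)\<rceil>) + 1/(1 - 2 powr (-s)))"
    using dyadic_sum[OF R t s(1)] unfolding b_def .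
  have b0: "b k \<ge> 0" for k by (simp add: b_def)
  have w0: "\<omega> > 0" unfolding \<omega>_def using d2 by simp
  have "(\<integral>\<^sup>+ y. ennreal (gb y) \<partial>lborel) \<le> (\<integral>\<^sup>+ y. (\<Sum>k. ennreal (h (\<rho> k)) * indicator (ball x (2 * \<rho> k)) y) \<partial>lborel)"
    by (intro nn_integral_mono pw)
  also have "\<dots> = (\<Sum>k. (\<integral>\<^sup>+ y. ennreal (h (\<rho> k)) * indicator (ball x (2 * \<rho> k)) y \<partial>lborel))"
    by (rule nn_integral_suminf) (auto intro!: borel_measurable_times_ennreal borel_measurable_indicator)
  also have "\<dots> = (\<Sum>k. ennreal (h (\<rho> k)) * emeasure lborel (ball x (2 * \<rho> k)))"
    by (subst nn_integral_cmult_indicator) auto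
  also have "\<dots> = (\<Sum>k. ennreal (\<omega> * 2^N * b k))"
  proof (rule suminf_cong)
    fix k
    have "emeasure lborel (ball x (2 * \<rho> k)) = ennreal (\<omega> * (2 * \<rho> k)^N)"
      using rpos[of k] by (simp add: emeasure_ball \<omega>_def d_def N_def)
    then show "ennreal (h (\<rho> k)) * emeasure lborel (ball x (2 * \<rho> k)) = ennreal (\<omega> * 2^N * b k)"
    proof -
      have nn0: "0 \<le> \<omega> * (2 * \<rho> k)^N" using w0 rpos[of k] by simp
      have "ennreal (h (\<rho> k)) * emeasure lborel (ball x (2 * \<rho> k)) = ennreal (h (\<rho> k) * (\<omega> * (2 * \<rho> k)^N))"
        unfolding \<open>emeasure lborel (ball x (2 * \<rho> k)) = ennreal (\<omega> * (2 * \<rho> k)^N)\<close>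
        by (rule ennreal_mult[OF h0 nn0, symmetric])
      also have "\<dots> = ennreal (\<omega> * 2^N * b k)" by (simp only: hterm)
      finally show ?thesis .
    qed
  qed
  also have "\<dots> = ennreal (\<Sum>k. \<omega> * 2^N * b k)"
    using bsum b0 w0 by (intro suminf_ennreal2 summable_mult) auto
  also have "(\<Sum>k. \<omega> * 2^N * b k) = \<omega> * 2^N * suminf b"
    using bsum by (simp add: suminf_mult)
  finally have nn: "(\<integral>\<^sup>+ y. ennreal (gb y) \<partial>lborel) \<le> ennreal (\<omega> * 2^N * suminf b)" .
  have gb0: "gb y \<ge> 0" for y using h0 by (simp add: gbh)
  have int: "integrable lborel gb"
  proof (subst integrable_iff_bounded, intro conjI meas)
    have "(\<integral>\<^sup>+ y. ennreal (norm (gb y)) \<partial>lborel) = (\<integral>\<^sup>+ y. ennreal (gb y) \<partial>lborel)"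
      using gb0 by simp
    also have "\<dots> < \<infinity>" using nn by (simp add: le_less_trans)
    finally show "(\<integral>\<^sup>+ y. ennreal (norm (gb y)) \<partial>lborel) < \<infinity>" .
  qed
  have "ennreal (integral\<^sup>L lborel gb) = (\<integral>\<^sup>+ y. ennreal (gb y) \<partial>lborel)"
    using nn_integral_eq_integral[OF int] gb0 by simp
  then have "ennreal (integral\<^sup>L lborel gb) \<le> ennreal (\<omega> * 2^N * suminf b)" using nn by simp
  then have "integral\<^sup>L lborel gb \<le> \<omega> * 2^N * suminf b"
  proof -
    have "0 \<le> suminf b" using bsum b0 by (intro suminf_nonneg) auto
    then have "0 \<le> \<omega> * 2^N * suminf b" using w0 by simp
    then show ?thesis using \<open>ennreal (integral\<^sup>L lborel gb) \<le> ennreal (\<omega> * 2^N * suminf b)\<close> by simp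
  qed
  also have "\<dots> \<le> \<omega> * 2^N * (t powr s * (real (nat \<lceil>log 2 (R/t)\<rceil>) + 1/(1 - 2 powr (-s))))"
    using bsum w0 by (intro mult_left_mono) auto
  finally show ?thesis using int by (simp add: \<omega>_def d_def N_def)
qed

lemma lower_sum:
  fixes F :: "real^'n \<Rightarrow> real" and \<Omega> :: "(real^'n) set" and x :: "real^'n"
    and S :: "nat \<Rightarrow> (real^'n) set" and a :: "nat \<Rightarrow> real"
  assumes int: "integrable lborel (\<lambda>y. indicator \<Omega> y * F y)"
  and nonneg: "\<forall>y\<in>\<Omega>. y \<noteq> x \<longrightarrow> 0 \<le> F y"
  and disj: "\<forall>i<N. \<forall>j<N. i \<noteq> j \<longrightarrow> S i \<inter> S j = {}"
  and sub: "\<forall>j<N. S j \<subseteq> \<Omega>" and sets: "\<forall>j<N. S j \<in> sets lborel"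
  and fin: "\<forall>j<N. emeasure lborel (S j) < \<infinity>"
  and bnd: "\<forall>j<N. \<forall>y\<in>S j. y \<noteq> x \<longrightarrow> a j \<le> F y"
  shows "(\<Sum>j<N. a j * measure lborel (S j)) \<le> integral\<^sup>L lborel (\<lambda>y. indicator \<Omega> y * F y)"
proof -
  have ij: "integrable lborel (\<lambda>y. a j * indicator (S j) y)" if "j < N" for j
    using sets fin that by (intro integrable_mult_right integrable_real_indicator) auto
  have "(\<Sum>j<N. a j * measure lborel (S j)) = (\<Sum>j<N. integral\<^sup>L lborel (\<lambda>y. a j * indicator (S j) y))"
  proof (rule sum.cong)
    fix j assume "j \<in> {..<N}"
    then show "a j * measure lborel (S j) = integral\<^sup>L lborel (\<lambda>y. a j * indicator (S j) y)"
      by simp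
  qed simp
  also have "\<dots> = integral\<^sup>L lborel (\<lambda>y. \<Sum>j<N. a j * indicator (S j) y)"
    by (rule Bochner_Integration.integral_sum[symmetric]) (use ij in auto)
  also have "\<dots> \<le> integral\<^sup>L lborel (\<lambda>y. indicator \<Omega> y * F y)"
  proof (rule integral_mono_AE)
    show "integrable lborel (\<lambda>y. \<Sum>j<N. a j * indicator (S j) y)"
      by (rule Bochner_Integration.integrable_sum) (use ij in auto)
    show "integrable lborel (\<lambda>y. indicator \<Omega> y * F y)" by (rule int)
    show "AE y in lborel. (\<Sum>j<N. a j * indicator (S j) y) \<le> indicator \<Omega> y * F y"
      using AE_lborel_singleton[of x]
    proof (rule AE_mp, intro AE_I2 impI)
      fix y assume yx: "y \<noteq> x"
      show "(\<Sum>j<N. a j * indicator (S j) y) \<le> indicator \<Omega> y * F y"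
      proof (cases "\<exists>j<N. y \<in> S j")
        case True
        then obtain j where j: "j < N" "y \<in> S j" by blast
        have "(\<Sum>i<N. a i * indicator (S i) y) = a j * indicator (S j) y + (\<Sum>i\<in>{..<N} - {j}. a i * indicator (S i) y)"
          using j by (subst sum.remove[of _ j]) auto
        also have "(\<Sum>i\<in>{..<N} - {j}. a i * indicator (S i) y) = 0"
        proof (rule sum.neutral, intro ballI)
          fix i assume "i \<in> {..<N} - {j}"
          then have "y \<notin> S i" using disj j by blast
          then show "a i * indicator (S i) y = 0" by simp
        qed
        finally have "(\<Sum>i<N. a i * indicator (S i) y) = a j" using j by simp
        moreover have "y \<in> \<Omega>" using sub j by blast
        ultimately show ?thesis using bnd j yx by simp
      next
        case False
        then have "(\<Sum>i<N. a i * indicator (S i) y) = 0" by (intro sum.neutral) auto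
        moreover have "0 \<le> indicator \<Omega> y * F y" using nonneg yx by (cases "y \<in> \<Omega>") auto
        ultimately show ?thesis by simp
      qed
    qed
  qed
  finally show ?thesis .
qed

lemma count_log:
  fixes \<tau> t :: real
  assumes tau: "0 < \<tau>" "\<tau> \<le> 1" and t: "0 < t" "t \<le> (\<tau>/2)^2"
  shows "(\<forall>k<nat \<lfloor>log 2 (\<tau>/(2*t))\<rfloor> + 1. 2*t \<le> \<tau>/2^k) \<and>
         ln (1/t) / (2 * ln 2) \<le> real (nat \<lfloor>log 2 (\<tau>/(2*t))\<rfloor> + 1)"
proof -
  define v where "v = log 2 (\<tau>/(2*t))"
  have "(\<tau>/2)^2 \<le> \<tau>/4" using tau by (simp add: power2_eq_square field_simps mult_left_le_one_le)
  then have "t < \<tau>/2" using t tau by simp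
  then have q1: "1 < \<tau>/(2*t)" using t by (simp add: field_simps)
  then have v0: "0 < v" unfolding v_def by simp
  have A: "2*t \<le> \<tau>/2^k" if "k < nat \<lfloor>v\<rfloor> + 1" for k
  proof -
    have "real k \<le> v" using that v0 by linarith
    then have "2 powr (real k) \<le> 2 powr v" by (intro powr_mono) auto
    also have "2 powr v = \<tau>/(2*t)" unfolding v_def using q1 by simp
    finally have "2^k \<le> \<tau>/(2*t)" by (simp add: powr_realpow)
    then show ?thesis using t by (simp add: field_simps)
  qed
  have "ln t \<le> ln ((\<tau>/2)^2)" using t tau by simp
  also have "\<dots> = 2 * ln (\<tau>/2)" using tau by (simp add: ln_realpow)
  finally have lt: "ln t \<le> 2 * ln (\<tau>/2)" .
  have "v = (ln (\<tau>/2) - ln t) / ln 2" unfolding v_def using tau t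
    by (simp add: log_def ln_div ln_mult field_simps)
  moreover have "ln (1/t) = - ln t" using t by (simp add: ln_div)
  ultimately have B: "ln (1/t) / (2 * ln 2) \<le> v" using lt
    by (simp add: field_simps)
  have "v \<le> real (nat \<lfloor>v\<rfloor> + 1)" using v0 by linarith
  then show ?thesis using A B unfolding v_def by auto
qed

lemma dist_in_ball:
  fixes x y \<nu> :: "real^'n"
  assumes "norm \<nu> = 1" "\<sigma> > 0" "y \<in> ball (x - \<sigma> *\<^sub>R \<nu>) (\<sigma>/8)"
  shows "7*\<sigma>/8 < dist x y \<and> dist x y < 9*\<sigma>/8"
proof -
  have e: "dist x (x - \<sigma> *\<^sub>R \<nu>) = \<sigma>" using assms by (simp add: dist_norm)
  have d: "dist (x - \<sigma> *\<^sub>R \<nu>) y < \<sigma>/8" using assms by simp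
  have "dist x y \<le> dist x (x - \<sigma> *\<^sub>R \<nu>) + dist (x - \<sigma> *\<^sub>R \<nu>) y" by (rule dist_triangle)
  moreover have "dist x (x - \<sigma> *\<^sub>R \<nu>) \<le> dist x y + dist y (x - \<sigma> *\<^sub>R \<nu>)" by (rule dist_triangle)
  ultimately show ?thesis using e d by (simp add: dist_commute)
qed

lemma cone_lower:
  fixes F :: "real^'n \<Rightarrow> real" and \<Omega> :: "(real^'n) set" and x \<nu> :: "real^'n"
  assumes int: "integrable lborel (\<lambda>y. indicator \<Omega> y * F y)"
  and nonneg: "\<forall>y\<in>\<Omega>. y \<noteq> x \<longrightarrow> 0 \<le> F y"
  and nu: "norm \<nu> = 1" and tau: "0 < \<tau>" "\<tau> \<le> 1" and t: "0 < t" "t \<le> (\<tau>/2)^2"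
  and cone: "\<forall>\<sigma>. 0 < \<sigma> \<and> \<sigma> \<le> \<tau> \<longrightarrow> ball (x - \<sigma> *\<^sub>R \<nu>) (\<sigma>/8) \<subseteq> \<Omega>"
  and low: "\<forall>y\<in>\<Omega>. y \<noteq> x \<longrightarrow> A * t powr s * (max (dist x y) t) powr (- real CARD('n)) \<le> F y"
  and A: "A \<ge> 0"
  shows "A * unit_ball_vol (real CARD('n)) * 9 powr (- real CARD('n)) * t powr s * (ln (1/t) / (2 * ln 2))
     \<le> integral\<^sup>L lborel (\<lambda>y. indicator \<Omega> y * F y)"
proof -
  define d where "d = real CARD('n)"
  define N where "N = CARD('n)"
  define \<omega> where "\<omega> = unit_ball_vol d"
  define M where "M = nat \<lfloor>log 2 (\<tau>/(2*t))\<rfloor> + 1"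
  define \<sigma> where "\<sigma> = (\<lambda>k::nat. \<tau>/2^k)"
  define S where "S = (\<lambda>k. ball (x - \<sigma> k *\<^sub>R \<nu>) (\<sigma> k/8))"
  define a where "a = (\<lambda>k. A * t powr s * (9 * \<sigma> k / 8) powr (-d))"
  have cl: "(\<forall>k<M. 2*t \<le> \<sigma> k) \<and> ln (1/t) / (2 * ln 2) \<le> real M"
    using count_log[OF tau t] unfolding M_def \<sigma>_def .
  have spos: "\<sigma> k > 0" for k using tau by (simp add: \<sigma>_def)
  have sle: "\<sigma> k \<le> \<tau>" for k using tau by (simp add: \<sigma>_def field_simps)
  have w0: "\<omega> > 0" unfolding \<omega>_def d_def by simp
  have sub: "\<forall>j<M. S j \<subseteq> \<Omega>" using cone spos sle unfolding S_def by blast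
  have disj: "\<forall>i<M. \<forall>j<M. i \<noteq> j \<longrightarrow> S i \<inter> S j = {}"
  proof (intro allI impI)
    fix i j assume "i < M" "j < M" "i \<noteq> j"
    have gen: "S i \<inter> S j = {}" if "i < j" for i j
    proof -
      have "\<sigma> j \<le> \<sigma> i / 2"
      proof -
        have "(2::real)^(Suc i) \<le> 2^j" using that by (intro power_increasing) auto
        then show ?thesis using tau by (simp add: \<sigma>_def field_simps)
      qed
      show ?thesis
      proof (rule ccontr)
        assume "S i \<inter> S j \<noteq> {}"
        then obtain y where "y \<in> S i" "y \<in> S j" by blast
        then have "7 * \<sigma> i / 8 < dist x y" "dist x y < 9 * \<sigma> j / 8"
          using dist_in_ball[OF nu spos] unfolding S_def by blast+
        then show False using \<open>\<sigma> j \<le> \<sigma> i / 2\<close> spos[of i] by simp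
      qed
    qed
    show "S i \<inter> S j = {}"
      using gen[of i j] gen[of j i] \<open>i \<noteq> j\<close> by (cases "i < j") auto
  qed
  have sets: "\<forall>j<M. S j \<in> sets lborel" unfolding S_def by simp
  have emb: "emeasure lborel (S j) = ennreal (\<omega> * (\<sigma> j / 8)^N)" for j
    unfolding S_def using spos[of j] by (simp add: emeasure_ball \<omega>_def d_def N_def)
  have fin: "\<forall>j<M. emeasure lborel (S j) < \<infinity>" using emb by simp
  have mb: "measure lborel (S j) = \<omega> * (\<sigma> j / 8)^N" for j
    using emb[of j] spos[of j] w0 by (simp add: measure_def)
  have bnd: "\<forall>j<M. \<forall>y\<in>S j. y \<noteq> x \<longrightarrow> a j \<le> F y"
  proof (intro allI impI ballI)
    fix j y assume j: "j < M" and y: "y \<in> S j" and yx: "y \<noteq> x"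
    have dd: "7 * \<sigma> j / 8 < dist x y" "dist x y < 9 * \<sigma> j / 8"
      using dist_in_ball[OF nu spos y[unfolded S_def]] by auto
    have "2*t \<le> \<sigma> j" using cl j by blast
    then have mx: "max (dist x y) t = dist x y" using dd t by simp
    have "y \<in> \<Omega>" using sub j y by blast
    then have "A * t powr s * (dist x y) powr (-d) \<le> F y" using low yx mx unfolding d_def by metis
    moreover have "(9 * \<sigma> j / 8) powr (-d) \<le> (dist x y) powr (-d)"
      using dd spos[of j] by (intro powr_mono2') (auto simp: d_def)
    then have "A * t powr s * (9 * \<sigma> j / 8) powr (-d) \<le> A * t powr s * (dist x y) powr (-d)"
      using A by (intro mult_left_mono) auto
    ultimately show "a j \<le> F y" unfolding a_def by linarith
  qed
  have prod: "a j * measure lborel (S j) = A * \<omega> * 9 powr (-d) * t powr s" for j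
  proof -
    have p1: "(\<sigma> j / 8)^N = (\<sigma> j / 8) powr d" using spos[of j] by (simp add: powr_realpow d_def N_def)
    have p2: "(9 * \<sigma> j / 8) powr (-d) = 9 powr (-d) * (\<sigma> j / 8) powr (-d)"
      using spos[of j] by (simp add: powr_mult[symmetric])
    have p3: "(\<sigma> j / 8) powr (-d) * (\<sigma> j / 8) powr d = 1"
      using spos[of j] by (simp add: powr_add[symmetric])
    have "a j * measure lborel (S j) = A * t powr s * \<omega> * 9 powr (-d) * ((\<sigma> j / 8) powr (-d) * (\<sigma> j / 8) powr d)"
      unfolding a_def mb p1 p2 by (simp add: ac_simps)
    then show ?thesis using p3 by simp
  qed
  have "(\<Sum>j<M. a j * measure lborel (S j)) \<le> integral\<^sup>L lborel (\<lambda>y. indicator \<Omega> y * F y)"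
    by (rule lower_sum[OF int nonneg disj sub sets fin bnd])
  moreover have "(\<Sum>j<M. a j * measure lborel (S j)) = real M * (A * \<omega> * 9 powr (-d) * t powr s)"
    using prod by simp
  moreover have "A * \<omega> * 9 powr (-d) * t powr s * (ln (1/t) / (2 * ln 2)) \<le> real M * (A * \<omega> * 9 powr (-d) * t powr s)"
  proof -
    have "0 \<le> A * \<omega> * 9 powr (-d) * t powr s" using A w0 by simp
    then have "ln (1/t) / (2 * ln 2) * (A * \<omega> * 9 powr (-d) * t powr s) \<le> real M * (A * \<omega> * 9 powr (-d) * t powr s)"
      using cl by (intro mult_right_mono) auto
    then show ?thesis by (metis mult.commute)
  qed
  ultimately show ?thesis unfolding \<omega>_def d_def by linarith
qed

lemma lin_help:
  fixes a0 b0 L :: real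
  assumes "a0 \<ge> 0" "b0 \<ge> 0" "L \<ge> 0"
  shows "a0 + b0 * L \<le> (a0 + b0) * (1 + L)"
proof -
  have "0 \<le> a0 * L" using assms by simp
  moreover have "(a0 + b0) * (1 + L) = a0 + b0 * L + b0 + a0 * L" by (simp add: algebra_simps)
  ultimately show ?thesis using assms by linarith
qed

theorem lemma3p8:
  fixes \<Omega> :: "(real^'n) set" and s :: real and G :: "real^'n \<Rightarrow> real^'n \<Rightarrow> real"
  assumes n2: "CARD('n) \<ge> 2"
    and s: "0 < s" "s < 1"
    and dom: "open \<Omega>" "connected \<Omega>" "bounded \<Omega>" "\<Omega> \<noteq> {}" "C2_boundary \<Omega>"
    and green: "frac_green s \<Omega> G"
    and est: "\<exists>c1>0. \<exists>c2>0. \<forall>x\<in>\<Omega>. \<forall>y\<in>\<Omega>. x \<noteq> y \<longrightarrow>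
        (let r = dist x y;
             B = r powr (2 * s - real CARD('n)) * (min (bdist \<Omega> x / r) 1) powr s
                   * (min (bdist \<Omega> y / r) 1) powr s
         in c1 * B \<le> G x y \<and> G x y \<le> c2 * B)"
  shows "\<exists>c>0. \<exists>C>0. \<forall>x\<in>\<Omega>.
      c * bdist \<Omega> x powr s * \<bar>ln (bdist \<Omega> x)\<bar> \<le> phi_delta s \<Omega> G x \<and>
      phi_delta s \<Omega> G x \<le> C * bdist \<Omega> x powr s * (1 + \<bar>ln (bdist \<Omega> x)\<bar>)"
proof -
  define d where "d = real CARD('n)"
  define N where "N = CARD('n)"
  define \<omega> where "\<omega> = unit_ball_vol d"
  have d2: "d \<ge> 2" using n2 by (simp add: d_def)
  have w0: "\<omega> > 0" unfolding \<omega>_def using d2 by simp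
  obtain c1 c2 where c1: "c1 > 0" and c2: "c2 > 0" and estC: "\<forall>x\<in>\<Omega>. \<forall>y\<in>\<Omega>. x \<noteq> y \<longrightarrow>
        (let r = dist x y;
             B = r powr (2 * s - real CARD('n)) * (min (bdist \<Omega> x / r) 1) powr s
                   * (min (bdist \<Omega> y / r) 1) powr s
         in c1 * B \<le> G x y \<and> G x y \<le> c2 * B)"
    using est by blast
  define Bf where "Bf = (\<lambda>x y. dist x y powr (2 * s - d) * (min (bdist \<Omega> x / dist x y) 1) powr s
                   * (min (bdist \<Omega> y / dist x y) 1) powr s)"
  have GB: "c1 * Bf x y \<le> G x y \<and> G x y \<le> c2 * Bf x y" if "x \<in> \<Omega>" "y \<in> \<Omega>" "x \<noteq> y" for x y
  proof -
    have "let r = dist x y;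
             B = r powr (2 * s - real CARD('n)) * (min (bdist \<Omega> x / r) 1) powr s
                   * (min (bdist \<Omega> y / r) 1) powr s
         in c1 * B \<le> G x y \<and> G x y \<le> c2 * B" using estC that by blast
    then show ?thesis unfolding Let_def Bf_def d_def .
  qed
  have nc: "- \<Omega> \<noteq> {}"
  proof
    assume "- \<Omega> = {}"
    then have "\<Omega> = UNIV" by auto
    with dom(3) show False by simp
  qed
  have clc: "closed (- \<Omega>)" using dom(1) by auto
  have dpos: "bdist \<Omega> y > 0" if "y \<in> \<Omega>" for y
    unfolding bdist_def using infdist_pos_not_in_closed[OF clc nc] that by auto
  have dtri: "bdist \<Omega> y \<le> bdist \<Omega> x + dist x y" for x y
    unfolding bdist_def using infdist_triangle[of y "- \<Omega>" x] by (simp add: dist_commute)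
  have ballsub: "ball x (bdist \<Omega> x) \<subseteq> \<Omega>" for x
  proof
    fix y assume y: "y \<in> ball x (bdist \<Omega> x)"
    show "y \<in> \<Omega>"
    proof (rule ccontr)
      assume "y \<notin> \<Omega>"
      then have "bdist \<Omega> x \<le> dist x y" unfolding bdist_def by (intro infdist_le) auto
      then show False using y by simp
    qed
  qed
  obtain Bd where Bd: "Bd > 0" "\<forall>y\<in>\<Omega>. norm y \<le> Bd" using dom(3) bounded_pos by blast
  define R where "R = 2 * Bd + 1"
  have R0: "R > 0" using Bd by (simp add: R_def)
  have inR: "dist x y < R" if "x \<in> \<Omega>" "y \<in> \<Omega>" for x y
  proof -
    have "dist x y \<le> norm x + norm y" by (simp add: dist_norm norm_triangle_ineq4)
    moreover have "norm x \<le> Bd" "norm y \<le> Bd" using Bd that by auto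
    ultimately show ?thesis by (simp add: R_def)
  qed
  obtain e :: "real^'n" where e: "norm e = 1" using vector_choose_size[of 1] by auto
  have tR: "bdist \<Omega> x \<le> R" if "x \<in> \<Omega>" for x
  proof -
    define z where "z = x + R *\<^sub>R e"
    have "R = norm (R *\<^sub>R e)" using e R0 by simp
    also have "\<dots> \<le> norm z + norm x" unfolding z_def by (metis add_diff_cancel_left' norm_triangle_ineq4 add.commute)
    finally have "R \<le> norm z + norm x" .
    moreover have "norm x \<le> Bd" using Bd that by auto
    ultimately have "norm z > Bd" by (simp add: R_def)
    then have "z \<notin> \<Omega>" using Bd by auto
    then have "bdist \<Omega> x \<le> dist x z" unfolding bdist_def by (intro infdist_le) auto
    also have "dist x z = R" using e R0 by (simp add: z_def dist_norm)
    finally show ?thesis .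
  qed
  have Fup: "G x y * bdist \<Omega> y powr (-s) \<le> c2 * min (dist x y powr (s - d)) (bdist \<Omega> x powr s * dist x y powr (-d))"
    if "x \<in> \<Omega>" "y \<in> \<Omega>" "x \<noteq> y" for x y
  proof -
    have p: "bdist \<Omega> y powr (-s) > 0" using dpos[OF that(2)] by simp
    have "G x y * bdist \<Omega> y powr (-s) \<le> c2 * Bf x y * bdist \<Omega> y powr (-s)"
      using GB[OF that] p by (intro mult_right_mono) auto
    also have "\<dots> = c2 * (Bf x y * bdist \<Omega> y powr (-s))" by simp
    also have "\<dots> \<le> c2 * min (dist x y powr (s - d)) (bdist \<Omega> x powr s * dist x y powr (-d))"
      using pw_upper[of "dist x y" "bdist \<Omega> x" "bdist \<Omega> y" s d] that dpos s c2
      unfolding Bf_def by (intro mult_left_mono) auto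
    finally show ?thesis .
  qed
  have Flow: "c1 * 2 powr (-s) * bdist \<Omega> x powr s * (max (dist x y) (bdist \<Omega> x)) powr (-d) \<le> G x y * bdist \<Omega> y powr (-s)"
    if "x \<in> \<Omega>" "y \<in> \<Omega>" "x \<noteq> y" for x y
  proof -
    have p: "bdist \<Omega> y powr (-s) > 0" using dpos[OF that(2)] by simp
    have "c1 * 2 powr (-s) * bdist \<Omega> x powr s * (max (dist x y) (bdist \<Omega> x)) powr (-d)
        = c1 * (2 powr (-s) * bdist \<Omega> x powr s * (max (dist x y) (bdist \<Omega> x)) powr (-d))" by simp
    also have "\<dots> \<le> c1 * (Bf x y * bdist \<Omega> y powr (-s))"
      using pw_lower[of "dist x y" "bdist \<Omega> x" "bdist \<Omega> y" s d] that dpos s c1 d2 dtri[of y x]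
      unfolding Bf_def by (intro mult_left_mono) auto
    also have "\<dots> = (c1 * Bf x y) * bdist \<Omega> y powr (-s)" by simp
    also have "\<dots> \<le> G x y * bdist \<Omega> y powr (-s)"
      using GB[OF that] p by (intro mult_right_mono) auto
    finally show ?thesis .
  qed
  have Fnn: "0 \<le> G x y * bdist \<Omega> y powr (-s)" if "x \<in> \<Omega>" "y \<in> \<Omega>" "x \<noteq> y" for x y
  proof -
    have "0 \<le> c1 * 2 powr (-s) * bdist \<Omega> x powr s * (max (dist x y) (bdist \<Omega> x)) powr (-d)"
      using c1 by simp
    then show ?thesis using Flow[OF that] by linarith
  qed
  have mbd: "(\<lambda>y. bdist \<Omega> y) \<in> borel_measurable borel"
    unfolding bdist_def by (intro borel_measurable_continuous_onI continuous_on_infdist continuous_on_id)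
  have mF: "(\<lambda>y. indicator \<Omega> y * (G x y * bdist \<Omega> y powr (-s))) \<in> borel_measurable lborel"
    if "x \<in> \<Omega>" for x
  proof -
    have mG: "G x \<in> borel_measurable lborel" using green that unfolding frac_green_def by blast
    have m1: "indicator \<Omega> \<in> borel_measurable borel" using dom(1) by (intro borel_measurable_indicator) simp
    have m2: "(\<lambda>y. bdist \<Omega> y powr (-s)) \<in> borel_measurable borel"
      by (intro powr_real_measurable mbd) auto
    have "(\<lambda>y. G x y * bdist \<Omega> y powr (-s)) \<in> borel_measurable lborel"
      using borel_measurable_times[OF mG, of "\<lambda>y. bdist \<Omega> y powr (-s)"] m2 by simp
    then show ?thesis using borel_measurable_times[OF m1[simplified measurable_lborel2[symmetric]]] by simp
  qed
  have phi_eq: "phi_delta s \<Omega> G x = integral\<^sup>L lborel (\<lambda>y. indicator \<Omega> y * (G x y * bdist \<Omega> y powr (-s)))" for x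
    unfolding phi_delta_def set_lebesgue_integral_def by simp
  define Q where "Q = 1 / (1 - 2 powr (-s))"
  have Q0: "Q \<ge> 0"
  proof -
    have "1 < (2::real) powr s" using s by (simp add: gr_one_powr)
    then have "2 powr (-s) < (1::real)" by (simp add: powr_minus inverse_less_1_iff)
    then show ?thesis by (simp add: Q_def)
  qed
  define Cu where "Cu = c2 * \<omega> * 2^N * ((\<bar>ln R\<bar> / ln 2 + 1 + Q) + 1 / ln 2)"
  have Cu0: "Cu > 0" unfolding Cu_def using c2 w0 Q0 by (intro mult_pos_pos add_nonneg_pos) auto
  have int_and_upper: "integrable lborel (\<lambda>y. indicator \<Omega> y * (G x y * bdist \<Omega> y powr (-s))) \<and>
      phi_delta s \<Omega> G x \<le> Cu * bdist \<Omega> x powr s * (1 + \<bar>ln (bdist \<Omega> x)\<bar>)" if xO: "x \<in> \<Omega>" for x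
  proof -
    define t where "t = bdist \<Omega> x"
    have t0: "t > 0" using dpos[OF xO] by (simp add: t_def)
    define gb where "gb = (\<lambda>y. indicator (ball x R) y * min (dist x y powr (s - real CARD('n))) (t powr s * dist x y powr (- real CARD('n))))"
    have DI: "integrable lborel gb \<and> integral\<^sup>L lborel gb \<le> \<omega> * 2^N * (t powr s * (real (nat \<lceil>log 2 (R/t)\<rceil>) + Q))"
      using dyadic_integral[OF R0 t0 s n2] unfolding gb_def \<omega>_def d_def N_def Q_def by blast
    have AEb: "AE y in lborel. indicator \<Omega> y * (G x y * bdist \<Omega> y powr (-s)) \<le> c2 * gb y
                 \<and> 0 \<le> indicator \<Omega> y * (G x y * bdist \<Omega> y powr (-s))"
      using AE_lborel_singleton[of x]
    proof (rule AE_mp, intro AE_I2 impI)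
      fix y assume yx: "y \<noteq> x"
      show "indicator \<Omega> y * (G x y * bdist \<Omega> y powr (-s)) \<le> c2 * gb y \<and> 0 \<le> indicator \<Omega> y * (G x y * bdist \<Omega> y powr (-s))"
      proof (cases "y \<in> \<Omega>")
        case True
        then have "y \<in> ball x R" using inR[OF xO True] by simp
        then have "gb y = min (dist x y powr (s - d)) (t powr s * dist x y powr (-d))"
          by (simp add: gb_def d_def)
        then show ?thesis using Fup[OF xO True yx[symmetric]] Fnn[OF xO True yx[symmetric]] True
          by (simp add: t_def)
      next
        case False
        have "gb y \<ge> 0" by (simp add: gb_def)
        then show ?thesis using False c2 by simp
      qed
    qed
    have intF: "integrable lborel (\<lambda>y. indicator \<Omega> y * (G x y * bdist \<Omega> y powr (-s)))"
    proof (rule Bochner_Integration.integrable_bound[where f="\<lambda>y. c2 * gb y"])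
      show "integrable lborel (\<lambda>y. c2 * gb y)" using DI by auto
      show "(\<lambda>y. indicator \<Omega> y * (G x y * bdist \<Omega> y powr (-s))) \<in> borel_measurable lborel" by (rule mF[OF xO])
      show "AE y in lborel. norm (indicator \<Omega> y * (G x y * bdist \<Omega> y powr (-s))) \<le> norm (c2 * gb y)"
        using AEb by eventually_elim auto
    qed
    have "phi_delta s \<Omega> G x \<le> integral\<^sup>L lborel (\<lambda>y. c2 * gb y)"
      unfolding phi_eq
    proof (rule integral_mono_AE[OF intF])
      show "integrable lborel (\<lambda>y. c2 * gb y)" using DI by blast
      show "AE y in lborel. indicator \<Omega> y * (G x y * bdist \<Omega> y powr (-s)) \<le> c2 * gb y"
        using AEb by eventually_elim auto
    qed
    also have "\<dots> = c2 * integral\<^sup>L lborel gb" by simp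
    also have "\<dots> \<le> c2 * (\<omega> * 2^N * (t powr s * (real (nat \<lceil>log 2 (R/t)\<rceil>) + Q)))"
      using DI c2 by (intro mult_left_mono) auto
    also have "\<dots> \<le> c2 * (\<omega> * 2^N * (t powr s * ((\<bar>ln R\<bar> + \<bar>ln t\<bar>) / ln 2 + 1 + Q)))"
      using K_bound[OF R0 t0] c2 w0 by (intro mult_left_mono) auto
    also have "(\<bar>ln R\<bar> + \<bar>ln t\<bar>) / ln 2 + 1 + Q = (\<bar>ln R\<bar> / ln 2 + 1 + Q) + (1 / ln 2) * \<bar>ln t\<bar>"
      by (simp add: add_divide_distrib)
    also have "\<dots> \<le> ((\<bar>ln R\<bar> / ln 2 + 1 + Q) + 1 / ln 2) * (1 + \<bar>ln t\<bar>)"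
      using Q0 by (intro lin_help) auto
    finally have "phi_delta s \<Omega> G x \<le> c2 * (\<omega> * 2^N * (t powr s * (((\<bar>ln R\<bar> / ln 2 + 1 + Q) + 1 / ln 2) * (1 + \<bar>ln t\<bar>))))"
      using c2 w0 by (simp add: mult_left_mono)
    then show ?thesis using intF by (simp add: Cu_def t_def ac_simps)
  qed
  define A where "A = c1 * 2 powr (-s)"
  have A0: "A > 0" using c1 by (simp add: A_def)
  define Ab where "Ab = A * \<omega>"
  have Ab0: "Ab > 0" using A0 w0 by (simp add: Ab_def)
  have lower_ball: "Ab * bdist \<Omega> x powr s \<le> phi_delta s \<Omega> G x" if xO: "x \<in> \<Omega>" for x
  proof -
    define t where "t = bdist \<Omega> x"
    have t0: "t > 0" using dpos[OF xO] by (simp add: t_def)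
    have intF: "integrable lborel (\<lambda>y. indicator \<Omega> y * (G x y * bdist \<Omega> y powr (-s)))"
      using int_and_upper[OF xO] by blast
    have "(\<Sum>j<(1::nat). A * t powr s * t powr (-d) * measure lborel (ball x t))
          \<le> integral\<^sup>L lborel (\<lambda>y. indicator \<Omega> y * (G x y * bdist \<Omega> y powr (-s)))"
    proof (rule lower_sum[where S="\<lambda>_. ball x t" and a="\<lambda>_. A * t powr s * t powr (-d)" and N=1, OF intF])
      show "\<forall>y\<in>\<Omega>. y \<noteq> x \<longrightarrow> 0 \<le> G x y * bdist \<Omega> y powr - s" using Fnn xO by auto
      show "\<forall>j<1. ball x t \<subseteq> \<Omega>" using ballsub t_def by auto
      show "\<forall>j<1. \<forall>y\<in>ball x t. y \<noteq> x \<longrightarrow> A * t powr s * t powr - d \<le> G x y * bdist \<Omega> y powr - s"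
      proof (intro allI impI ballI)
        fix j y assume y: "y \<in> ball x t" "y \<noteq> x"
        have yO: "y \<in> \<Omega>" using y ballsub[of x] t_def by blast
        have "max (dist x y) t = t" using y by simp
        then show "A * t powr s * t powr - d \<le> G x y * bdist \<Omega> y powr - s"
          using Flow[OF xO yO y(2)[symmetric]] unfolding A_def t_def by simp
      qed
    qed (use t0 in \<open>auto simp: emeasure_ball\<close>)
    then have LS: "A * t powr s * t powr (-d) * measure lborel (ball x t) \<le> phi_delta s \<Omega> G x"
      unfolding phi_eq by simp
    have m: "measure lborel (ball x t) = \<omega> * t^N"
      using t0 by (simp add: content_ball \<omega>_def d_def N_def)
    have e1: "t powr (-d) * t^N = 1"
      using t0 by (simp add: powr_realpow[symmetric] d_def N_def powr_add[symmetric])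
    have "A * t powr s * t powr (-d) * measure lborel (ball x t) = (A * \<omega> * t powr s) * (t powr (-d) * t^N)"
      unfolding m by (simp only: ac_simps)
    also have "\<dots> = Ab * t powr s" unfolding e1 Ab_def by simp
    finally have "Ab * t powr s \<le> phi_delta s \<Omega> G x" using LS by linarith
    then show ?thesis unfolding t_def .
  qed
  obtain d0 \<tau>0 where d0: "d0 > 0" and tau0: "\<tau>0 > 0" and cone: "\<forall>x\<in>\<Omega>. bdist \<Omega> x < d0 \<longrightarrow>
     (\<exists>\<nu>. norm \<nu> = 1 \<and> (\<forall>\<tau>. 0 < \<tau> \<and> \<tau> \<le> \<tau>0 \<longrightarrow> ball (x - \<tau> *\<^sub>R \<nu>) (\<tau>/8) \<subseteq> \<Omega>))"
    using global_cone[OF dom(1) dom(3) dom(5)] by blast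
  define \<tau>1 where "\<tau>1 = min \<tau>0 1"
  have tau1: "0 < \<tau>1" "\<tau>1 \<le> 1" "\<tau>1 \<le> \<tau>0" using tau0 by (auto simp: \<tau>1_def)
  define t1 where "t1 = min d0 ((\<tau>1/2)^2)"
  have t1: "t1 > 0" "t1 \<le> d0" "t1 \<le> (\<tau>1/2)^2" using d0 tau1 by (auto simp: t1_def)
  have t1le: "t1 < 1"
  proof -
    have "(\<tau>1/2)^2 \<le> (1/2)^2" using tau1 by (intro power_mono) auto
    moreover have "(1/2::real)^2 = 1/4" by (simp add: power2_eq_square)
    ultimately show ?thesis using t1 by linarith
  qed
  define \<kappa> where "\<kappa> = A * \<omega> * 9 powr (-d) / (2 * ln 2)"
  have kappa0: "\<kappa> > 0" using A0 w0 by (simp add: \<kappa>_def)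
  have lower_cone: "\<kappa> * bdist \<Omega> x powr s * \<bar>ln (bdist \<Omega> x)\<bar> \<le> phi_delta s \<Omega> G x"
    if xO: "x \<in> \<Omega>" and small: "bdist \<Omega> x < t1" for x
  proof -
    define t where "t = bdist \<Omega> x"
    have t0: "t > 0" using dpos[OF xO] by (simp add: t_def)
    have tsm: "t < d0" "t \<le> (\<tau>1/2)^2" "t < 1" using small t1 t1le by (auto simp: t_def)
    obtain \<nu> where nu: "norm \<nu> = 1" and cn: "\<forall>\<tau>. 0 < \<tau> \<and> \<tau> \<le> \<tau>0 \<longrightarrow> ball (x - \<tau> *\<^sub>R \<nu>) (\<tau>/8) \<subseteq> \<Omega>"
      using cone xO tsm(1) t_def by blast
    have cn1: "\<forall>\<sigma>. 0 < \<sigma> \<and> \<sigma> \<le> \<tau>1 \<longrightarrow> ball (x - \<sigma> *\<^sub>R \<nu>) (\<sigma>/8) \<subseteq> \<Omega>"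
      using cn tau1 by auto
    have intF: "integrable lborel (\<lambda>y. indicator \<Omega> y * (G x y * bdist \<Omega> y powr (-s)))"
      using int_and_upper[OF xO] by blast
    have low: "\<forall>y\<in>\<Omega>. y \<noteq> x \<longrightarrow> A * t powr s * (max (dist x y) t) powr (- real CARD('n)) \<le> G x y * bdist \<Omega> y powr (-s)"
      using Flow xO unfolding A_def t_def d_def by auto
    have nn: "\<forall>y\<in>\<Omega>. y \<noteq> x \<longrightarrow> 0 \<le> G x y * bdist \<Omega> y powr (-s)" using Fnn xO by auto
    have "A * unit_ball_vol (real CARD('n)) * 9 powr (- real CARD('n)) * t powr s * (ln (1/t) / (2 * ln 2))
     \<le> integral\<^sup>L lborel (\<lambda>y. indicator \<Omega> y * (G x y * bdist \<Omega> y powr (-s)))"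
      by (rule cone_lower[OF intF nn nu tau1(1) tau1(2) t0 tsm(2) cn1 low]) (use A0 in simp)
    moreover have "ln (1/t) = \<bar>ln t\<bar>" using t0 tsm(3) by (simp add: ln_div)
    ultimately show ?thesis unfolding phi_eq \<kappa>_def t_def \<omega>_def d_def by (simp add: ac_simps)
  qed
  define L0 where "L0 = \<bar>ln t1\<bar> + \<bar>ln R\<bar>"
  have L00: "L0 \<ge> 0" by (simp add: L0_def)
  define c where "c = min \<kappa> (Ab / (L0 + 1))"
  have c0: "c > 0" using kappa0 Ab0 L00 by (simp add: c_def)
  have lower: "c * bdist \<Omega> x powr s * \<bar>ln (bdist \<Omega> x)\<bar> \<le> phi_delta s \<Omega> G x" if xO: "x \<in> \<Omega>" for x
  proof (cases "bdist \<Omega> x < t1")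
    case True
    have "c * bdist \<Omega> x powr s * \<bar>ln (bdist \<Omega> x)\<bar> \<le> \<kappa> * bdist \<Omega> x powr s * \<bar>ln (bdist \<Omega> x)\<bar>"
      by (intro mult_right_mono) (auto simp: c_def)
    also have "\<dots> \<le> phi_delta s \<Omega> G x" by (rule lower_cone[OF xO True])
    finally show ?thesis .
  next
    case False
    define t where "t = bdist \<Omega> x"
    have t0: "t > 0" using dpos[OF xO] by (simp add: t_def)
    have "ln t1 \<le> ln t" using False t1 t0 by (simp add: t_def)
    moreover have "ln t \<le> ln R" using tR[OF xO] t0 R0 by (simp add: t_def)
    ultimately have lt: "\<bar>ln t\<bar> \<le> L0" unfolding L0_def by linarith
    have "c * t powr s * \<bar>ln t\<bar> \<le> (Ab / (L0 + 1)) * t powr s * \<bar>ln t\<bar>"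
      by (intro mult_right_mono) (auto simp: c_def)
    also have "\<dots> = Ab * t powr s * (\<bar>ln t\<bar> / (L0 + 1))" by simp
    also have "\<dots> \<le> Ab * t powr s * 1"
      using lt L00 Ab0 by (intro mult_left_mono) (auto simp: divide_le_eq_1)
    also have "\<dots> \<le> phi_delta s \<Omega> G x" using lower_ball[OF xO] by (simp add: t_def)
    finally show ?thesis by (simp add: t_def)
  qed
  show ?thesis
    using c0 Cu0 lower int_and_upper by blast
qed

end
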